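(* Let $A$ be a vector space and give $\mathrm{Sub}\,A$ the coarse open support topology. Then $\mathrm{Sub}\,A$ is a sober space, and for every $V\in\mathrm{Sub}\,A$ the complement of the closure of $\{V\}$ is $\{W\in\mathrm{Sub}\,A: V\not\subset W\}$.
   Context: $\mathrm{Sub}\,A$ is the set of linear subspaces of $A$. The coarse open support topology on $\mathrm{Sub}\,A$ is the coarsest topology in which every set $\check a=\{V\in\mathrm{Sub}\,A: a\notin V\}$, $a\in A$, is open. A space is sober if every irreducible closed set is the closure of a unique point. *)

theory Defs
  imports "HOL-Analysis.Analysis"
begin

text \<open>A vector space over a field 'k with carrier the type 'v is given by a scalar
  multiplication smul satisfying vector_space smul.  Sub A is the set of its linear subspaces.\<close>
definition Sub :: "('k::field \<Rightarrow> 'v::ab_group_add \<Rightarrow> 'v) \<Rightarrow> 'v set set" where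
  "Sub smul = {V. module.subspace smul V}"

text \<open>The coarse open support topology: the coarsest topology on Sub A in which every set
  {V in Sub A. a not in V} is open, i.e. the topology on Sub A generated by these sets as subbasis.\<close>
definition coarse_open_support_topology ::
  "('k::field \<Rightarrow> 'v::ab_group_add \<Rightarrow> 'v) \<Rightarrow> 'v set topology" where
  "coarse_open_support_topology smul =
     topology (arbitrary union_of
       (finite intersection_of (\<lambda>U. \<exists>a. U = {V \<in> Sub smul. a \<notin> V}) relative_to Sub smul))"

definition irreducible_in :: "'a topology \<Rightarrow> 'a set \<Rightarrow> bool" where
  "irreducible_in X C \<longleftrightarrow> C \<noteq> {} \<and> C \<subseteq> topspace X \<and>
     (\<forall>F1 F2. closedin X F1 \<and> closedin X F2 \<and> C \<subseteq> F1 \<union> F2 \<longrightarrow> C \<subseteq> F1 \<or> C \<subseteq> F2)"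

definition sober_space :: "'a topology \<Rightarrow> bool" where
  "sober_space X \<longleftrightarrow>
     (\<forall>C. closedin X C \<and> irreducible_in X C \<longrightarrow> (\<exists>!x. x \<in> topspace X \<and> C = X closure_of {x}))"

end

theory Submission
  imports Defs
begin

lemma cos_topspace: "topspace (coarse_open_support_topology smul) = Sub smul"
  unfolding coarse_open_support_topology_def by simp

lemma cos_open_chk:
  "openin (coarse_open_support_topology smul) {V \<in> Sub smul. a \<notin> V}"
  unfolding coarse_open_support_topology_def openin_subbase
  apply (rule arbitrary_union_of_inc)
  apply (rule relative_to_subset_inc)
   apply blast
  apply (rule finite_intersection_of_inc)
  by blast

lemma cos_closed_in:
  "closedin (coarse_open_support_topology smul) {V \<in> Sub smul. a \<in> V}"
proof -
  have "topspace (coarse_open_support_topology smul) - {V \<in> Sub smul. a \<in> V} = {V \<in> Sub smul. a \<notin> V}"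
    by (auto simp: cos_topspace)
  then show ?thesis unfolding closedin_def using cos_open_chk[of smul a] by (simp add: cos_topspace)
qed

lemma cos_open_basic:
  assumes "openin (coarse_open_support_topology smul) S" "x \<in> S"
  shows "\<exists>A. finite A \<and> A \<inter> x = {} \<and> {U \<in> Sub smul. A \<inter> U = {}} \<subseteq> S"
proof -
  let ?P = "\<lambda>U. \<exists>a. U = {V \<in> Sub smul. a \<notin> V}"
  from assms(1) have "(arbitrary union_of (finite intersection_of ?P relative_to Sub smul)) S"
    unfolding coarse_open_support_topology_def openin_subbase .
  then obtain \<U> where U: "\<U> \<subseteq> Collect (finite intersection_of ?P relative_to Sub smul)" "\<Union>\<U> = S"
    unfolding union_of_def by blast
  then obtain B where B: "B \<in> \<U>" "x \<in> B" using assms(2) by blast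
  then have "(finite intersection_of ?P relative_to Sub smul) B" using U by blast
  then obtain F where F: "finite F" "F \<subseteq> Collect ?P" "Sub smul \<inter> \<Inter>F = B"
    unfolding relative_to_def intersection_of_def by blast
  define g where "g = (\<lambda>f. SOME a. f = {V \<in> Sub smul. a \<notin> V})"
  have g: "f = {V \<in> Sub smul. g f \<notin> V}" if "f \<in> F" for f
  proof -
    have "\<exists>a. f = {V \<in> Sub smul. a \<notin> V}" using F(2) that by blast
    then show ?thesis unfolding g_def by (rule someI_ex)
  qed
  show ?thesis
  proof (intro exI conjI)
    show "finite (g ` F)" using F(1) by simp
    show "g ` F \<inter> x = {}"
    proof (rule ccontr)
      assume "g ` F \<inter> x \<noteq> {}"
      then obtain f where "f \<in> F" "g f \<in> x" by blast
      moreover have "x \<in> f" using B(2) F(3) \<open>f \<in> F\<close> by blast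
      ultimately show False using g by blast
    qed
    show "{U \<in> Sub smul. g ` F \<inter> U = {}} \<subseteq> S"
    proof
      fix U assume "U \<in> {U \<in> Sub smul. g ` F \<inter> U = {}}"
      then have "U \<in> Sub smul" "\<forall>f\<in>F. g f \<notin> U" by auto
      then have "U \<in> f" if "f \<in> F" for f using g[OF that] that by blast
      then have "U \<in> B" using F(3) \<open>U \<in> Sub smul\<close> by blast
      then show "U \<in> S" using B(1) U(2) by blast
    qed
  qed
qed

lemma cos_closure_single:
  assumes "V \<in> Sub smul" "W \<in> Sub smul"
  shows "W \<in> (coarse_open_support_topology smul) closure_of {V} \<longleftrightarrow> V \<subseteq> W"
proof
  assume h: "W \<in> (coarse_open_support_topology smul) closure_of {V}"
  show "V \<subseteq> W"
  proof
    fix a assume "a \<in> V"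
    show "a \<in> W"
    proof (rule ccontr)
      assume "a \<notin> W"
      then have "W \<in> {V \<in> Sub smul. a \<notin> V}" using assms by blast
      have "\<forall>T. W \<in> T \<and> openin (coarse_open_support_topology smul) T \<longrightarrow> (\<exists>y. y \<in> {V} \<and> y \<in> T)"
        using h unfolding in_closure_of by (rule conjunct2)
      then have "W \<in> {U \<in> Sub smul. a \<notin> U} \<and> openin (coarse_open_support_topology smul) {U \<in> Sub smul. a \<notin> U} \<longrightarrow> (\<exists>y. y \<in> {V} \<and> y \<in> {U \<in> Sub smul. a \<notin> U})"
        by (rule spec)
      then have "\<exists>y. y \<in> {V} \<and> y \<in> {U \<in> Sub smul. a \<notin> U}"
        using \<open>W \<in> {V \<in> Sub smul. a \<notin> V}\<close> cos_open_chk[of smul a] by (rule mp[OF _ conjI])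
      then show False using \<open>a \<in> V\<close> by simp
    qed
  qed
next
  assume h: "V \<subseteq> W"
  show "W \<in> (coarse_open_support_topology smul) closure_of {V}"
    unfolding in_closure_of cos_topspace
  proof (intro conjI allI impI)
    show "W \<in> Sub smul" by fact
    fix T assume T: "W \<in> T \<and> openin (coarse_open_support_topology smul) T"
    obtain A where "finite A" "A \<inter> W = {}" "{U \<in> Sub smul. A \<inter> U = {}} \<subseteq> T"
      using cos_open_basic[of smul T W] T by blast
    then have "V \<in> T" using h assms(1) by blast
    then show "\<exists>y. y \<in> {V} \<and> y \<in> T" by blast
  qed
qed

lemma irred_finite:
  assumes "irreducible_in X C" "finite A" "\<And>a. a \<in> A \<Longrightarrow> closedin X (F a)"
    "C \<subseteq> (\<Union>a\<in>A. F a)"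
  shows "\<exists>a\<in>A. C \<subseteq> F a"
  using assms(2,3,4)
proof (induction A rule: finite_induct)
  case empty
  then show ?case using assms(1) unfolding irreducible_in_def by auto
next
  case (insert b A)
  have "closedin X (\<Union>a\<in>A. F a)"
    using insert by (intro closedin_Union) auto
  moreover have "closedin X (F b)" using insert by auto
  moreover have "C \<subseteq> F b \<union> (\<Union>a\<in>A. F a)" using insert by auto
  ultimately have "C \<subseteq> F b \<or> C \<subseteq> (\<Union>a\<in>A. F a)"
    using assms(1) unfolding irreducible_in_def by blast
  then show ?case using insert by auto
qed

theorem lemma3p5:
  fixes smul :: "'k::field \<Rightarrow> 'v::ab_group_add \<Rightarrow> 'v"
  assumes "vector_space smul"
  shows "sober_space (coarse_open_support_topology smul) \<and>
    (\<forall>V \<in> Sub smul.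
       topspace (coarse_open_support_topology smul) -
         (coarse_open_support_topology smul) closure_of {V}
       = {W \<in> Sub smul. \<not> V \<subseteq> W})"
proof
  let ?X = "coarse_open_support_topology smul"
  have md: "module smul" using assms unfolding vector_space_def module_def .
  show "\<forall>V \<in> Sub smul. topspace ?X - ?X closure_of {V} = {W \<in> Sub smul. \<not> V \<subseteq> W}"
    using cos_closure_single[of _ smul] by (auto simp: cos_topspace)
  show "sober_space ?X"
    unfolding sober_space_def
  proof (intro allI impI)
    fix C assume C: "closedin ?X C \<and> irreducible_in ?X C"
    have CS: "C \<subseteq> Sub smul" "C \<noteq> {}" using C unfolding irreducible_in_def cos_topspace by auto
    define x where "x = \<Inter>C"
    have xS: "x \<in> Sub smul"
      using CS md module.subspace_Inter unfolding x_def Sub_def by blast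
    have xC: "x \<in> C"
    proof -
      have "x \<in> ?X closure_of C"
        unfolding in_closure_of cos_topspace
      proof (intro conjI allI impI)
        show "x \<in> Sub smul" by fact
        fix T assume T: "x \<in> T \<and> openin ?X T"
        obtain A where A: "finite A" "A \<inter> x = {}" "{U \<in> Sub smul. A \<inter> U = {}} \<subseteq> T"
          using cos_open_basic[of smul T x] T by blast
        show "\<exists>y. y \<in> C \<and> y \<in> T"
        proof (rule ccontr)
          assume "\<not> ?thesis"
          then have "C \<subseteq> (\<Union>a\<in>A. {V \<in> Sub smul. a \<in> V})" using A(3) CS(1) by blast
          then obtain a where "a \<in> A" "C \<subseteq> {V \<in> Sub smul. a \<in> V}"
            using irred_finite[of ?X C A "\<lambda>a. {V \<in> Sub smul. a \<in> V}"] C A(1) cos_closed_in[of smul] by blast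
          then have "a \<in> x" unfolding x_def by blast
          then show False using A(2) \<open>a \<in> A\<close> by blast
        qed
      qed
      then show ?thesis using C by (simp add: closure_of_closedin)
    qed
    have eq: "C = ?X closure_of {x}"
    proof
      show "?X closure_of {x} \<subseteq> C"
        using C xC by (intro closure_of_minimal) auto
      show "C \<subseteq> ?X closure_of {x}"
      proof
        fix W assume "W \<in> C"
        then have "x \<subseteq> W" "W \<in> Sub smul" unfolding x_def using CS(1) by blast+
        then show "W \<in> ?X closure_of {x}" using cos_closure_single[OF xS, of W] by simp
      qed
    qed
    show "\<exists>!x. x \<in> topspace ?X \<and> C = ?X closure_of {x}"
    proof (rule ex1I[of _ x])
      show "x \<in> topspace ?X \<and> C = ?X closure_of {x}" using xS eq by (simp add: cos_topspace)
      fix y assume y: "y \<in> topspace ?X \<and> C = ?X closure_of {y}"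
      then have yS: "y \<in> Sub smul" by (simp add: cos_topspace)
      have c: "?X closure_of {y} = ?X closure_of {x}" using y eq by simp
      have "y \<in> ?X closure_of {y}" using cos_closure_single[OF yS yS] by simp
      then have "x \<subseteq> y" using c cos_closure_single[OF xS yS] by simp
      have "x \<in> ?X closure_of {x}" using cos_closure_single[OF xS xS] by simp
      then have "y \<subseteq> x" using c cos_closure_single[OF yS xS] by simp
      show "y = x" using \<open>x \<subseteq> y\<close> \<open>y \<subseteq> x\<close> by (rule antisym[symmetric])
    qed
  qed
qed

end
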